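(* Let $(x_n,y_n)_{n\in\mathbb Z}$ and $(x'_n,y'_n)_{n\in\mathbb Z}$ be two elliptic sequences on the same biquadratic polynomial $F$, in general position. For integers $m\ge1$, $r,s$, let $$P_{m,r,s}(x)=\frac{(x-x_r)(x-x_{r+1})\cdots(x-x_{r+m-1})}{(x-x'_s)(x-x'_{s+1})\cdots(x-x'_{s+m-1})}.$$ Then there are a constant $C_{m,r,s}$ and a polynomial $D_{m,r,s}$ of degree at most $2$ such that, as rational functions of $y$, $$\mathcal D P_{m,r,s}(y)=C_{m,r,s}\,Y_2(y)\,\frac{(y-y_r)\cdots(y-y_{r+m-2})}{(y-y'_{s-1})(y-y'_s)\cdots(y-y'_{s+m-1})},\qquad \mathcal M P_{m,r,s}(y)=D_{m,r,s}(y)\,\frac{(y-y_r)\cdots(y-y_{r+m-2})}{(y-y'_{s-1})\cdots(y-y'_{s+m-1})}.$$ Moreover $C_{1,r,s}=\dfrac{x_r-x'_s}{X_2(x'_s)}$, $D_{1,r,s}(y)=\dfrac{Y_0(y)+(x_r+x'_s)Y_1(y)/2+x_rx'_sY_2(y)}{X_2(x'_s)}$, and for every $m\ge1$: $$D_{m,r,s}(y_{r-1})=-\tfrac12C_{m,r,s}Y_2(y_{r-1})(x_r-x_{r-1}),\quad D_{m,r,s}(y_{r+m-1})=\tfrac12C_{m,r,s}Y_2(y_{r+m-1})(x_{r+m}-x_{r+m-1}),$$ $$D_{m,r,s}(y'_{s-1})=\tfrac12C_{m,r,s}Y_2(y'_{s-1})(x'_s-x'_{s-1}),\quad D_{m,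r,s}(y'_{s+m-1})=-\tfrac12C_{m,r,s}Y_2(y'_{s+m-1})(x'_{s+m}-x'_{s+m-1}).$$
   Context: $F(x,y)=\sum_{i,j=0}^2c_{i,j}x^iy^j=Y_0(y)+xY_1(y)+x^2Y_2(y)=X_0(x)+yX_1(x)+y^2X_2(x)$. An elliptic sequence on $F$ is a doubly infinite sequence $(x_n,y_n)_{n\in\mathbb Z}$ such that for every $n$, $x_n,x_{n+1}$ are the two roots of $x\mapsto F(x,y_n)$ and $y_{n-1},y_n$ are the two roots of $y\mapsto F(x_n,y)$. "General position" means all the $x_n,x'_n$ are pairwise distinct, all the $y_n,y'_n$ are pairwise distinct, and $X_2,Y_2$ do not vanish at these points. For a rational function $f$ and a value $y$, let $x^+,x^-$ be the two roots of $F(x,y)=0$ and define $(\mathcal Df)(y)=\frac{f(x^+)-f(x^-)}{x^+-x^-}$ and $(\mathcal Mf)(y)=\frac{f(x^+)+f(x^-)}2$; these are symmetric in $x^\pm$ and define rational functions of $y$; on the lattice, $(\mathcal Df)(y_n)=\frac{f(x_{n+1})-f(x_n)}{x_{n+1}-x_n}$, $(\mathcal Mf)(y_n)=\frac{f(x_n)+f(x_{n+1})}2$. Empty products equal $1$. *)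

theory Defs
  imports "HOL-Computational_Algebra.Polynomial" Complex_Main
begin

definition Fb :: "(nat \<Rightarrow> nat \<Rightarrow> complex) \<Rightarrow> complex \<Rightarrow> complex \<Rightarrow> complex" where
  "Fb c x y = (\<Sum>i\<le>2. \<Sum>j\<le>2. c i j * x ^ i * y ^ j)"

text \<open>Y_i(y) = sum_j c i j y^j, so that F(x,y) = Y_0(y) + x Y_1(y) + x^2 Y_2(y).\<close>
definition Ycoef :: "(nat \<Rightarrow> nat \<Rightarrow> complex) \<Rightarrow> nat \<Rightarrow> complex \<Rightarrow> complex" where
  "Ycoef c i y = (\<Sum>j\<le>2. c i j * y ^ j)"

text \<open>X_j(x) = sum_i c i j x^i, so that F(x,y) = X_0(x) + y X_1(x) + y^2 X_2(x).\<close>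
definition Xcoef :: "(nat \<Rightarrow> nat \<Rightarrow> complex) \<Rightarrow> nat \<Rightarrow> complex \<Rightarrow> complex" where
  "Xcoef c j x = (\<Sum>i\<le>2. c i j * x ^ i)"

definition elliptic_seq :: "(nat \<Rightarrow> nat \<Rightarrow> complex) \<Rightarrow> (int \<Rightarrow> complex) \<Rightarrow> (int \<Rightarrow> complex) \<Rightarrow> bool" where
  "elliptic_seq c x y \<longleftrightarrow>
     (\<forall>n t. Fb c t (y n) = Ycoef c 2 (y n) * (t - x n) * (t - x (n + 1))) \<and>
     (\<forall>n t. Fb c (x n) t = Xcoef c 2 (x n) * (t - y (n - 1)) * (t - y n))"

definition general_position ::
  "(nat \<Rightarrow> nat \<Rightarrow> complex) \<Rightarrow> (int \<Rightarrow> complex) \<Rightarrow> (int \<Rightarrow> complex) \<Rightarrow> (int \<Rightarrow> complex) \<Rightarrow> (int \<Rightarrow> complex) \<Rightarrow> bool" where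
  "general_position c x y x' y' \<longleftrightarrow>
     inj x \<and> inj x' \<and> (\<forall>n m. x n \<noteq> x' m) \<and>
     inj y \<and> inj y' \<and> (\<forall>n m. y n \<noteq> y' m) \<and>
     (\<forall>n. Xcoef c 2 (x n) \<noteq> 0 \<and> Xcoef c 2 (x' n) \<noteq> 0) \<and>
     (\<forall>n. Ycoef c 2 (y n) \<noteq> 0 \<and> Ycoef c 2 (y' n) \<noteq> 0)"

definition root_pair :: "(nat \<Rightarrow> nat \<Rightarrow> complex) \<Rightarrow> complex \<Rightarrow> complex \<Rightarrow> complex \<Rightarrow> bool" where
  "root_pair c y x1 x2 \<longleftrightarrow> Ycoef c 2 y \<noteq> 0 \<and> x1 \<noteq> x2 \<and> Fb c x1 y = 0 \<and> Fb c x2 y = 0"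

text \<open>The operators D and M evaluated at y, given the two roots x1, x2 of F(.,y).\<close>
definition Dop :: "(complex \<Rightarrow> complex) \<Rightarrow> complex \<Rightarrow> complex \<Rightarrow> complex" where
  "Dop f x1 x2 = (f x1 - f x2) / (x1 - x2)"

definition Mop :: "(complex \<Rightarrow> complex) \<Rightarrow> complex \<Rightarrow> complex \<Rightarrow> complex" where
  "Mop f x1 x2 = (f x1 + f x2) / 2"

definition Pmrs :: "(int \<Rightarrow> complex) \<Rightarrow> (int \<Rightarrow> complex) \<Rightarrow> nat \<Rightarrow> int \<Rightarrow> int \<Rightarrow> complex \<Rightarrow> complex" where
  "Pmrs x x' m r s t = (\<Prod>k<m. (t - x (r + int k))) / (\<Prod>k<m. (t - x' (s + int k)))"

end

theory Submission
  imports Defs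
begin

lemma Ycoef_exp: "Ycoef c i y = c i 0 + c i 1 * y + c i 2 * y^2"
  by (simp add: Ycoef_def numeral_2_eq_2)

lemma Xcoef_exp: "Xcoef c j x = c 0 j + c 1 j * x + c 2 j * x^2"
  by (simp add: Xcoef_def numeral_2_eq_2)

lemma Fb_Y: "Fb c t y = Ycoef c 0 y + t * Ycoef c 1 y + t^2 * Ycoef c 2 y"
  by (simp add: Fb_def Ycoef_exp numeral_2_eq_2 algebra_simps)

lemma vieta:
  assumes "root_pair c yy x1 x2"
  shows "Ycoef c 1 yy = - Ycoef c 2 yy * (x1 + x2)" "Ycoef c 0 yy = Ycoef c 2 yy * x1 * x2"
proof -
  define Y0 Y1 Y2 where "Y0 = Ycoef c 0 yy" "Y1 = Ycoef c 1 yy" "Y2 = Ycoef c 2 yy"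
  have ne: "x1 \<noteq> x2" and f1: "Y0 + x1*Y1 + x1^2*Y2 = 0" and f2: "Y0 + x2*Y1 + x2^2*Y2 = 0"
    using assms unfolding root_pair_def Y0_Y1_Y2_def Fb_Y by auto
  have "(x1 - x2) * (Y1 + (x1+x2)*Y2) = 0" using f1 f2
    by algebra
  hence "Y1 + (x1+x2)*Y2 = 0" using ne by simp
  hence h1: "Y1 = - Y2 * (x1+x2)" by algebra
  thus "Ycoef c 1 yy = - Ycoef c 2 yy * (x1 + x2)" by (simp add: Y0_Y1_Y2_def)
  have "Y0 = Y2*x1*x2" using f1 h1 by algebra
  thus "Ycoef c 0 yy = Ycoef c 2 yy * x1 * x2" by (simp add: Y0_Y1_Y2_def)
qed


lemma rp_F: assumes "root_pair c yy x1 x2"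
  shows "Fb c t yy = Ycoef c 2 yy * (t - x1) * (t - x2)"
proof -
  note h = vieta[OF assms]
  show ?thesis unfolding Fb_Y h by algebra
qed

definition Disc where "Disc c z = Ycoef c 1 z ^ 2 - 4 * Ycoef c 0 z * Ycoef c 2 z"

lemma rp_Disc: assumes "root_pair c yy x1 x2"
  shows "Disc c yy = Ycoef c 2 yy ^ 2 * (x1 - x2) ^ 2"
  using vieta[OF assms] unfolding Disc_def by algebra

lemma ell_rp: assumes "elliptic_seq c x y" "inj x" "\<And>n. Ycoef c 2 (y n) \<noteq> 0"
  shows "root_pair c (y n) (x n) (x (n+1))"
proof -
  have "\<And>t. Fb c t (y n) = Ycoef c 2 (y n) * (t - x n) * (t - x (n + 1))"
    using assms(1) unfolding elliptic_seq_def by blast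
  from this[of "x n"] this[of "x (n+1)"] have "Fb c (x n) (y n) = 0" "Fb c (x (n+1)) (y n) = 0" by simp_all
  moreover have "x n \<noteq> x (n+1)" using assms(2) by (metis inj_eq n_not_Suc_n add.commute zadd_int_left less_add_one order_less_irrefl)
  ultimately show ?thesis using assms(3) unfolding root_pair_def by blast
qed

lemma ell_X: assumes "elliptic_seq c x y"
  shows "Fb c (x k) t = Xcoef c 2 (x k) * (t - y (k - 1)) * (t - y k)"
  using assms unfolding elliptic_seq_def by blast

lemma rp_prod: assumes "root_pair c yy x1 x2"
  shows "(x1 - b) * (x2 - b) * Ycoef c 2 yy = Fb c b yy"
  using rp_F[OF assms, of b] by (simp add: algebra_simps)

lemma alg_D: "(d::complex) \<noteq> 0 \<Longrightarrow> (a1*b1 - a2*b2)/d = (a1-a2)/d * ((b1+b2)/2) + (a1+a2)/2 * ((b1-b2)/d)"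
  by (simp add: field_simps)

lemma alg_M: "(d::complex) \<noteq> 0 \<Longrightarrow> (a1*b1 + a2*b2)/2 = (a1+a2)/2 * ((b1+b2)/2) + d^2/4 * ((a1-a2)/d) * ((b1-b2)/d)"
  by (simp add: field_simps power2_eq_square)

lemma Dop_mult: assumes "x1 \<noteq> x2" shows "Dop (\<lambda>t. f t * g t) x1 x2 = Dop f x1 x2 * Mop g x1 x2 + Mop f x1 x2 * Dop g x1 x2"
  unfolding Dop_def Mop_def by (rule alg_D) (use assms in simp)

lemma Mop_mult: assumes "x1 \<noteq> x2" shows "Mop (\<lambda>t. f t * g t) x1 x2 = Mop f x1 x2 * Mop g x1 x2 + (x1 - x2)^2/4 * Dop f x1 x2 * Dop g x1 x2"
  unfolding Dop_def Mop_def by (rule alg_M) (use assms in simp)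

lemma Pmrs_Suc: "Pmrs x x' (Suc m) r s = (\<lambda>t. Pmrs x x' m r s t * Pmrs x x' 1 (r + int m) (s + int m) t)"
  unfolding Pmrs_def by (rule ext) (simp add: times_divide_times_eq)

definition Yp :: "(nat \<Rightarrow> nat \<Rightarrow> complex) \<Rightarrow> nat \<Rightarrow> complex poly" where
  "Yp c i = [:c i 0, c i 1, c i 2:]"

lemma poly_Yp: "poly (Yp c i) z = Ycoef c i z"
  by (simp add: Yp_def Ycoef_exp algebra_simps power2_eq_square)

lemma degree_Yp: "degree (Yp c i) \<le> 2"
  unfolding Yp_def by (rule degree_le) (auto simp: coeff_pCons split: nat.splits)

definition Discp where "Discp c = (Yp c 1)^2 - smult 4 (Yp c 0 * Yp c 2)"

lemma poly_Discp: "poly (Discp c) z = Disc c z"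
  by (simp add: Discp_def Disc_def poly_Yp)

lemma degree_Discp: "degree (Discp c) \<le> 4"
proof -
  have "degree ((Yp c 1)^2) \<le> 4" using degree_Yp[of c 1]
    by (metis (no_types) degree_power_le mult_le_mono2 numeral_Bit0_eq_double order_trans mult_2 mult.commute)
  moreover have "degree (Yp c 0 * Yp c 2) \<le> 4"
    using degree_Yp[of c 0] degree_Yp[of c 2] degree_mult_le[of "Yp c 0" "Yp c 2"] by simp
  ultimately show ?thesis unfolding Discp_def
    by (meson degree_diff_le degree_smult_le order_trans)
qed

lemma two_roots:
  fixes p :: "complex poly"
  assumes "poly p a = 0" "poly p b = 0" "a \<noteq> b" "degree p \<le> n" "2 \<le> n"
  shows "\<exists>q. (\<forall>z. poly p z = (z - a) * (z - b) * poly q z) \<and> degree q \<le> n - 2"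
proof -
  obtain q1 where q1: "p = [:-a,1:] * q1" using assms(1) poly_eq_0_iff_dvd by blast
  have "poly q1 b = 0" using assms(2,3) q1 by simp
  then obtain q where q: "q1 = [:-b,1:] * q" using poly_eq_0_iff_dvd by blast
  have pq: "p = [:-a,1:] * ([:-b,1:] * q)" using q1 q by simp
  have "degree q \<le> n - 2"
  proof (cases "q = 0")
    case True thus ?thesis by simp
  next
    case False
    have nb: "[:-b,1:] \<noteq> (0::complex poly)" and na: "[:-a,1:] \<noteq> (0::complex poly)" by simp_all
    have nz: "[:-b,1:] * q \<noteq> 0" using False nb no_zero_divisors by blast
    have d1: "degree p = degree [:-a,1:] + degree ([:-b,1:] * q)" unfolding pq
      using degree_mult_eq[OF na nz] .
    have d2: "degree ([:-b,1:] * q) = degree [:-b,1:] + degree q"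
      using degree_mult_eq[OF nb False] .
    have "degree p = 2 + degree q" using d1 d2 by simp
    thus ?thesis using assms(4) by simp
  qed
  moreover have "\<forall>z. poly p z = (z - a) * (z - b) * poly q z" unfolding pq by (simp add: algebra_simps)
  ultimately show ?thesis by blast
qed


definition identP :: "(nat \<Rightarrow> nat \<Rightarrow> complex) \<Rightarrow> (int \<Rightarrow> complex) \<Rightarrow> (int \<Rightarrow> complex) \<Rightarrow> (int \<Rightarrow> complex) \<Rightarrow> (int \<Rightarrow> complex) \<Rightarrow> nat \<Rightarrow> int \<Rightarrow> int \<Rightarrow> complex \<Rightarrow> complex poly \<Rightarrow> bool" where
 "identP c x y x' y' m r s C D \<longleftrightarrow> (\<forall>yy x1 x2. root_pair c yy x1 x2 \<and>
        (\<forall>k<m. x1 \<noteq> x' (s + int k) \<and> x2 \<noteq> x' (s + int k)) \<and>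
        (\<forall>k\<le>m. yy \<noteq> y' (s - 1 + int k)) \<longrightarrow>
       Dop (Pmrs x x' m r s) x1 x2 =
         C * Ycoef c 2 yy * (\<Prod>k<m - 1. (yy - y (r + int k))) / (\<Prod>k\<le>m. (yy - y' (s - 1 + int k))) \<and>
       Mop (Pmrs x x' m r s) x1 x2 =
         poly D yy * (\<Prod>k<m - 1. (yy - y (r + int k))) / (\<Prod>k\<le>m. (yy - y' (s - 1 + int k))))"

lemma identP_D:
  assumes "identP c x y x' y' m r s C D" "root_pair c yy x1 x2"
        "\<forall>k<m. x1 \<noteq> x' (s + int k) \<and> x2 \<noteq> x' (s + int k)"
        "\<forall>k\<le>m. yy \<noteq> y' (s - 1 + int k)"
  shows "Dop (Pmrs x x' m r s) x1 x2 =
         C * Ycoef c 2 yy * (\<Prod>k<m - 1. (yy - y (r + int k))) / (\<Prod>k\<le>m. (yy - y' (s - 1 + int k)))"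
   "Mop (Pmrs x x' m r s) x1 x2 =
         poly D yy * (\<Prod>k<m - 1. (yy - y (r + int k))) / (\<Prod>k\<le>m. (yy - y' (s - 1 + int k)))"
  using assms unfolding identP_def by blast+

lemma gp_facts: assumes "general_position c x y x' y'"
  shows "inj x" "inj x'" "\<And>n m. x n \<noteq> x' m" "inj y" "inj y'" "\<And>n m. y n \<noteq> y' m"
    "\<And>n. Xcoef c 2 (x n) \<noteq> 0" "\<And>n. Xcoef c 2 (x' n) \<noteq> 0"
    "\<And>n. Ycoef c 2 (y n) \<noteq> 0" "\<And>n. Ycoef c 2 (y' n) \<noteq> 0"
  using assms unfolding general_position_def by blast+

lemma alg_r1: fixes p :: complex
  assumes "(p - 0)/(u - v) = C*Y*nu/de" "(p + 0)/2 = d*nu/de" "nu \<noteq> 0" "de \<noteq> 0" "u \<noteq> v"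
  shows "d = -(1/2)*C*Y*(v - u)"
proof -
  have uv: "u - v \<noteq> 0" using assms(5) by simp
  have a: "p * de = C*Y*nu*(u-v)" using assms(1) uv assms(4) by (simp add: field_simps)
  have b: "p * de = 2*d*nu" using assms(2) assms(4) by (simp add: field_simps)
  have "nu * (2*d) = nu * (C*Y*(u-v))" using a b by (simp add: algebra_simps)
  hence "2*d = C*Y*(u-v)" using assms(3) by simp
  thus ?thesis by (simp add: field_simps)
qed

lemma alg_r2: fixes p :: complex
  assumes "(0 - p)/(u - v) = C*Y*nu/de" "(0 + p)/2 = d*nu/de" "nu \<noteq> 0" "de \<noteq> 0" "u \<noteq> v"
  shows "d = (1/2)*C*Y*(v - u)"
proof -
  have uv: "u - v \<noteq> 0" using assms(5) by simp
  have a: "- p * de = C*Y*nu*(u-v)" using assms(1) uv assms(4) by (simp add: field_simps)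
  have b: "p * de = 2*d*nu" using assms(2) assms(4) by (simp add: field_simps)
  have "nu * (2*d) = nu * (C*Y*(v-u))" using a b by (simp add: algebra_simps)
  hence "2*d = C*Y*(v-u)" using assms(3) by simp
  thus ?thesis by (simp add: field_simps)
qed

lemma R_evals:
  assumes ell: "elliptic_seq c x y" and gp: "general_position c x y x' y'" and m1: "m \<ge> 1"
    and id: "identP c x y x' y' m r s C D"
  shows "poly D (y (r - 1)) = - (1/2) * C * Ycoef c 2 (y (r - 1)) * (x r - x (r - 1))"
    and "poly D (y (r + int m - 1)) = (1/2) * C * Ycoef c 2 (y (r + int m - 1)) * (x (r + int m) - x (r + int m - 1))"
proof -
  note g = gp_facts[OF gp]
  have injy: "\<And>i j. y i = y j \<longleftrightarrow> i = j" using g(4) by (simp add: inj_eq)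
  have injx: "\<And>i j. x i = x j \<longleftrightarrow> i = j" using g(1) by (simp add: inj_eq)
  have m0: "0 \<in> {..<m}" "m - 1 \<in> {..<m}" using m1 by auto
  {
    let ?z = "y (r - 1)"
    have rp: "root_pair c ?z (x (r-1)) (x r)" using ell_rp[OF ell g(1) g(9), of "r-1"] by simp
    have cond: "(\<forall>k<m. x (r-1) \<noteq> x' (s + int k) \<and> x r \<noteq> x' (s + int k)) \<and> (\<forall>k\<le>m. ?z \<noteq> y' (s - 1 + int k))"
      using g(3) g(6) by blast
    have P0: "Pmrs x x' m r s (x r) = 0"
    proof -
      have "(\<Prod>k<m. (x r - x (r + int k))) = 0"
        by (subst prod_zero_iff) (use m1 in \<open>auto intro!: bexI[of _ 0]\<close>)
      thus ?thesis unfolding Pmrs_def by simp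
    qed
    have nu: "(\<Prod>k<m - 1. (?z - y (r + int k))) \<noteq> 0"
      by (subst prod_zero_iff) (auto simp: injy)
    have de: "(\<Prod>k\<le>m. (?z - y' (s - 1 + int k))) \<noteq> 0"
      by (subst prod_zero_iff) (auto simp: g(6))
    have ne: "x (r-1) \<noteq> x r" by (simp add: injx)
    from id rp cond have e1: "Dop (Pmrs x x' m r s) (x (r-1)) (x r) = C * Ycoef c 2 ?z * (\<Prod>k<m - 1. (?z - y (r + int k))) / (\<Prod>k\<le>m. (?z - y' (s - 1 + int k)))"
      and e2: "Mop (Pmrs x x' m r s) (x (r-1)) (x r) = poly D ?z * (\<Prod>k<m - 1. (?z - y (r + int k))) / (\<Prod>k\<le>m. (?z - y' (s - 1 + int k)))"
      unfolding identP_def by blast+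
    show "poly D (y (r - 1)) = - (1/2) * C * Ycoef c 2 (y (r - 1)) * (x r - x (r - 1))"
      by (rule alg_r1[OF _ _ nu de ne, where p = "Pmrs x x' m r s (x (r-1))"])
        (use e1 e2 P0 in \<open>simp_all add: Dop_def Mop_def\<close>)
  }
  {
    let ?z = "y (r + int m - 1)"
    have rp: "root_pair c ?z (x (r + int m - 1)) (x (r + int m))" using ell_rp[OF ell g(1) g(9), of "r + int m - 1"] by simp
    have cond: "(\<forall>k<m. x (r + int m - 1) \<noteq> x' (s + int k) \<and> x (r + int m) \<noteq> x' (s + int k)) \<and> (\<forall>k\<le>m. ?z \<noteq> y' (s - 1 + int k))"
      using g(3) g(6) by blast
    have P0: "Pmrs x x' m r s (x (r + int m - 1)) = 0"
    proof -
      have "(\<Prod>k<m. (x (r + int m - 1) - x (r + int k))) = 0"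
      proof (subst prod_zero_iff)
        have "r + int (m - 1) = r + int m - 1" using m1 by (simp add: of_nat_diff)
        thus "\<exists>k\<in>{..<m}. x (r + int m - 1) - x (r + int k) = 0" using m0(2) by (intro bexI[of _ "m-1"]) (auto simp: algebra_simps)
      qed simp
      thus ?thesis unfolding Pmrs_def by simp
    qed
    have nu: "(\<Prod>k<m - 1. (?z - y (r + int k))) \<noteq> 0"
      by (subst prod_zero_iff) (auto simp: injy)
    have de: "(\<Prod>k\<le>m. (?z - y' (s - 1 + int k))) \<noteq> 0"
      by (subst prod_zero_iff) (auto simp: g(6))
    have ne: "x (r + int m - 1) \<noteq> x (r + int m)" by (simp add: injx)
    from id rp cond have e1: "Dop (Pmrs x x' m r s) (x (r + int m - 1)) (x (r + int m)) = C * Ycoef c 2 ?z * (\<Prod>k<m - 1. (?z - y (r + int k))) / (\<Prod>k\<le>m. (?z - y' (s - 1 + int k)))"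
      and e2: "Mop (Pmrs x x' m r s) (x (r + int m - 1)) (x (r + int m)) = poly D ?z * (\<Prod>k<m - 1. (?z - y (r + int k))) / (\<Prod>k\<le>m. (?z - y' (s - 1 + int k)))"
      unfolding identP_def by blast+
    show "poly D (y (r + int m - 1)) = (1/2) * C * Ycoef c 2 (y (r + int m - 1)) * (x (r + int m) - x (r + int m - 1))"
      by (rule alg_r2[OF _ _ nu de ne, where p = "Pmrs x x' m r s (x (r + int m))"])
        (use e1 e2 P0 in \<open>simp_all add: Dop_def Mop_def\<close>)
  }
qed


definition Cb where "Cb c x x' r s = (x r - x' s) / Xcoef c 2 (x' s)"
definition Db where "Db c x x' r s = smult (1 / Xcoef c 2 (x' s))
   (Yp c 0 + smult ((x r + x' s)/2) (Yp c 1) + smult (x r * x' s) (Yp c 2))"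

lemma poly_Db: "poly (Db c x x' r s) t = (Ycoef c 0 t + (x r + x' s) * Ycoef c 1 t / 2 + x r * x' s * Ycoef c 2 t) / Xcoef c 2 (x' s)"
  by (simp add: Db_def poly_Yp field_simps)

lemma degree_Db: "degree (Db c x x' r s) \<le> 2"
proof -
  have "degree (Yp c 0 + smult ((x r + x' s)/2) (Yp c 1) + smult (x r * x' s) (Yp c 2)) \<le> 2"
    by (meson degree_Yp degree_add_le degree_smult_le order_trans)
  thus ?thesis unfolding Db_def by (meson degree_smult_le order_trans)
qed

lemma Pmrs_1: "Pmrs x x' 1 r s t = (t - x r) / (t - x' s)"
  by (simp add: Pmrs_def)

lemma prod_atMost_1: "(\<Prod>k\<le>(1::nat). f k) = (f 0 * f 1 :: complex)"
  by (simp add: atMost_Suc)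

lemma alg_W: fixes W :: complex assumes "W \<noteq> 0" "X \<noteq> 0" "Y \<noteq> 0" "X*E = W*Y"
  shows "n/W = n/X * Y * 1 / E"
proof -
  have E: "E = W*Y/X" using assms by (simp add: field_simps)
  show ?thesis unfolding E using assms by (simp add: field_simps)
qed

lemma alg_bD: fixes a b :: complex
  assumes "X*E = ((x1-b)*(x2-b))*Y" "X \<noteq> 0" "Y \<noteq> 0" "x1 \<noteq> b" "x2 \<noteq> b" "x1 \<noteq> x2"
  shows "((x1-a)/(x1-b) - (x2-a)/(x2-b))/(x1-x2) = (a-b)/X * Y * 1 / E"
proof -
  have n: "x1 - b \<noteq> 0" "x2 - b \<noteq> 0" "x1 - x2 \<noteq> 0" using assms by auto
  have W: "(x1-b)*(x2-b) \<noteq> 0" using n by simp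
  have "(x1-a)/(x1-b) - (x2-a)/(x2-b) = ((x1-a)*(x2-b) - (x2-a)*(x1-b))/((x1-b)*(x2-b))"
    by (rule diff_frac_eq) (use n in auto)
  also have "(x1-a)*(x2-b) - (x2-a)*(x1-b) = (a-b)*(x1-x2)" by algebra
  finally have "((x1-a)/(x1-b) - (x2-a)/(x2-b))/(x1-x2) = (a-b)*(x1-x2)/((x1-b)*(x2-b))/(x1-x2)" by simp
  also have "\<dots> = (a-b)/((x1-b)*(x2-b))" using n(3) by simp
  also have "\<dots> = (a-b)/X * Y * 1 / E" by (rule alg_W[OF W assms(2,3,1)])
  finally show ?thesis .
qed

lemma alg_bM: fixes a b :: complex
  assumes "X*E = ((x1-b)*(x2-b))*Y" "X \<noteq> 0" "Y \<noteq> 0" "x1 \<noteq> b" "x2 \<noteq> b" "x1 \<noteq> x2"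
    "Y1 = - Y * (x1 + x2)" "Y0 = Y * x1 * x2"
  shows "((x1-a)/(x1-b) + (x2-a)/(x2-b))/2 = (Y0 + (a + b) * Y1 / 2 + a * b * Y) / X * 1 / E"
proof -
  have n: "x1 - b \<noteq> 0" "x2 - b \<noteq> 0" using assms by auto
  have W: "(x1-b)*(x2-b) \<noteq> 0" using n by simp
  define nn where "nn = x1*x2 - (a+b)*(x1+x2)/2 + a*b"
  have "(x1-a)/(x1-b) + (x2-a)/(x2-b) = ((x1-a)*(x2-b) + (x2-a)*(x1-b))/((x1-b)*(x2-b))"
    by (rule add_frac_eq) (use n in auto)
  also have "(x1-a)*(x2-b) + (x2-a)*(x1-b) = 2*nn" unfolding nn_def by (simp add: algebra_simps)
  finally have "((x1-a)/(x1-b) + (x2-a)/(x2-b))/2 = nn/((x1-b)*(x2-b))" by simp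
  also have "\<dots> = nn/X * Y * 1 / E" by (rule alg_W[OF W assms(2,3,1)])
  also have "nn/X * Y = (Y0 + (a + b) * Y1 / 2 + a * b * Y) / X" unfolding nn_def assms(7,8)
    by (simp add: field_simps)
  finally show ?thesis .
qed

lemma alg_e1: fixes a b :: complex assumes "X \<noteq> 0" "Y1 = - Y * (u + b)" "Y0 = Y * u * b"
  shows "(Y0 + (a + b) * Y1 / 2 + a * b * Y) / X = (1/2) * ((a - b) / X) * Y * (b - u)"
  unfolding assms(2,3) using assms(1) by (simp add: field_simps)

lemma alg_e2: fixes a b :: complex assumes "X \<noteq> 0" "Y1 = - Y * (b + v)" "Y0 = Y * b * v"
  shows "(Y0 + (a + b) * Y1 / 2 + a * b * Y) / X = - (1/2) * ((a - b) / X) * Y * (v - b)"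
  unfolding assms(2,3) using assms(1) by (simp add: field_simps)

lemma base:
  assumes ell: "elliptic_seq c x y" and ell': "elliptic_seq c x' y'" and gp: "general_position c x y x' y'"
  shows "identP c x y x' y' 1 r s (Cb c x x' r s) (Db c x x' r s)"
    "poly (Db c x x' r s) (y' (s - 1)) = (1/2) * Cb c x x' r s * Ycoef c 2 (y' (s - 1)) * (x' s - x' (s - 1))"
    "poly (Db c x x' r s) (y' (s + int 1 - 1)) = - (1/2) * Cb c x x' r s * Ycoef c 2 (y' (s + int 1 - 1)) * (x' (s + int 1) - x' (s + int 1 - 1))"
proof -
  note g = gp_facts[OF gp]
  let ?a = "x r" and ?b = "x' s" and ?X = "Xcoef c 2 (x' s)"
  show "identP c x y x' y' 1 r s (Cb c x x' r s) (Db c x x' r s)"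
    unfolding identP_def
  proof (intro allI impI)
    fix yy x1 x2
    assume h: "root_pair c yy x1 x2 \<and> (\<forall>k<1. x1 \<noteq> x' (s + int k) \<and> x2 \<noteq> x' (s + int k)) \<and> (\<forall>k\<le>1. yy \<noteq> y' (s - 1 + int k))"
    hence rp: "root_pair c yy x1 x2" and nb: "x1 \<noteq> ?b" "x2 \<noteq> ?b" by auto
    have ne: "x1 \<noteq> x2" and Y: "Ycoef c 2 yy \<noteq> 0" using rp unfolding root_pair_def by auto
    have XE: "?X * ((yy - y' (s - 1 + int 0)) * (yy - y' (s - 1 + int 1))) = (x1 - ?b) * (x2 - ?b) * Ycoef c 2 yy"
      using rp_prod[OF rp, of ?b] ell_X[OF ell', of s yy] by (simp add: algebra_simps)
    note v = vieta[OF rp]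
    have P1: "(\<Prod>k<1 - 1. (yy - y (r + int k))) = 1" by simp
    have P2: "(\<Prod>k\<le>1. (yy - y' (s - 1 + int k))) = (yy - y' (s - 1 + int 0)) * (yy - y' (s - 1 + int 1))"
      by (rule prod_atMost_1)
    note D1 = alg_bD[OF XE g(8) Y nb ne, of ?a] and M1 = alg_bM[OF XE g(8) Y nb ne v, of ?a]
    show "Dop (Pmrs x x' 1 r s) x1 x2 = Cb c x x' r s * Ycoef c 2 yy * (\<Prod>k<1 - 1. (yy - y (r + int k))) / (\<Prod>k\<le>1. (yy - y' (s - 1 + int k))) \<and>
       Mop (Pmrs x x' 1 r s) x1 x2 = poly (Db c x x' r s) yy * (\<Prod>k<1 - 1. (yy - y (r + int k))) / (\<Prod>k\<le>1. (yy - y' (s - 1 + int k)))"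
      unfolding P1 P2 Dop_def Mop_def Pmrs_1 Cb_def poly_Db D1 M1 by (rule conjI refl)+
  qed
  have rp1: "root_pair c (y' (s-1)) (x' (s-1)) (x' s)" using ell_rp[OF ell' g(2) g(10), of "s-1"] by simp
  have rp2: "root_pair c (y' s) (x' s) (x' (s+1))" using ell_rp[OF ell' g(2) g(10), of "s"] by simp
  note v1 = vieta[OF rp1] and v2 = vieta[OF rp2]
  show "poly (Db c x x' r s) (y' (s - 1)) = (1/2) * Cb c x x' r s * Ycoef c 2 (y' (s - 1)) * (x' s - x' (s - 1))"
    unfolding poly_Db Cb_def by (rule alg_e1[OF g(8) v1])
  show "poly (Db c x x' r s) (y' (s + int 1 - 1)) = - (1/2) * Cb c x x' r s * Ycoef c 2 (y' (s + int 1 - 1)) * (x' (s + int 1) - x' (s + int 1 - 1))"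
    unfolding poly_Db Cb_def using alg_e2[OF g(8) v2] by simp
qed


definition Gprop where "Gprop c x y x' y' m r s \<longleftrightarrow> (\<exists>C D. degree D \<le> 2 \<and> identP c x y x' y' m r s C D \<and>
   poly D (y' (s - 1)) = (1/2) * C * Ycoef c 2 (y' (s - 1)) * (x' s - x' (s - 1)) \<and>
   poly D (y' (s + int m - 1)) = - (1/2) * C * Ycoef c 2 (y' (s + int m - 1)) * (x' (s + int m) - x' (s + int m - 1)))"

lemma G1: assumes "elliptic_seq c x y" "elliptic_seq c x' y'" "general_position c x y x' y'"
  shows "Gprop c x y x' y' 1 r s"
  unfolding Gprop_def using base[OF assms, of r s] degree_Db[of c x x' r s] by blast

lemma alg_y1: fixes C :: complex
  assumes "C*d1 + C1*d = w*C'" "d*d1 + C*C1/4*Dl = w*d'" "d = 1/2*C*Y*(v-u)" "Dl = Y^2*(u-v)^2" "w \<noteq> 0"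
  shows "d' = 1/2*C'*Y*(v-u)"
proof -
  have "w*d' = 1/2*Y*(v-u)*(C*d1 + C1*d)" unfolding assms(2)[symmetric] assms(3,4) by (simp add: field_simps power2_eq_square)
  also have "\<dots> = w * (1/2*C'*Y*(v-u))" unfolding assms(1) by (simp add: field_simps power2_eq_square)
  finally show ?thesis using assms(5) by simp
qed

lemma alg_y2: fixes C :: complex
  assumes "C*d1 + C1*d = w*C'" "d*d1 + C*C1/4*Dl = w*d'" "d1 = -(1/2)*C1*Y*(v-u)" "Dl = Y^2*(u-v)^2" "w \<noteq> 0"
  shows "d' = -(1/2)*C'*Y*(v-u)"
proof -
  have "w*d' = -(1/2)*Y*(v-u)*(C*d1 + C1*d)" unfolding assms(2)[symmetric] assms(3,4) by (simp add: field_simps power2_eq_square)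
  also have "\<dots> = w * (-(1/2)*C'*Y*(v-u))" unfolding assms(1) by (simp add: field_simps power2_eq_square)
  finally have "w * d' = w * (-(1/2)*C'*Y*(v-u))" .
  thus ?thesis using assms(5) mult_left_cancel by blast
qed

lemma alg_stepD: fixes C :: complex
  assumes "C*d1 + C1*d = (u*t)*C'" "de \<noteq> 0" "t \<noteq> 0" "w \<noteq> 0"
  shows "(C*Y*nu/de) * (d1*1/(t*w)) + (d*nu/de) * (C1*Y*1/(t*w)) = C'*Y*(nu*u)/(de*w)"
proof -
  have "(C*Y*nu/de) * (d1*1/(t*w)) + (d*nu/de) * (C1*Y*1/(t*w)) = Y*nu*(C*d1 + C1*d)/(de*(t*w))"
    using assms(2-4) by (simp add: field_simps)
  also have "\<dots> = C'*Y*(nu*u)/(de*w)" unfolding assms(1) using assms(2-4) by (simp add: field_simps)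
  finally show ?thesis .
qed

lemma alg_stepM: fixes C :: complex
  assumes "d*d1 + C*C1/4*Dl = (u*t)*d'" "Dl = Y^2*q" "de \<noteq> 0" "t \<noteq> 0" "w \<noteq> 0"
  shows "(d*nu/de) * (d1*1/(t*w)) + q/4 * (C*Y*nu/de) * (C1*Y*1/(t*w)) = d'*(nu*u)/(de*w)"
proof -
  have "(d*nu/de) * (d1*1/(t*w)) + q/4 * (C*Y*nu/de) * (C1*Y*1/(t*w)) = nu*(d*d1 + C*C1/4*(Y^2*q))/(de*(t*w))"
    using assms(3-5) by (simp add: field_simps power2_eq_square)
  also have "\<dots> = d'*(nu*u)/(de*w)" unfolding assms(2)[symmetric] assms(1) using assms(3-5) by (simp add: field_simps)
  finally show ?thesis .
qed


lemma alg_van1: fixes C :: complex shows "(1/2*C*Y*(v-u))*(-(1/2)*C1*Y*(v-u)) + C*C1/4*(Y^2*(u-v)^2) = 0"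
  by (simp add: field_simps power2_eq_square)

lemma alg_van2: fixes C :: complex shows "(-(1/2)*C*Y*(v-u))*(1/2*C1*Y*(v-u)) + C*C1/4*(Y^2*(u-v)^2) = 0"
  by (simp add: field_simps power2_eq_square)

lemma step:
  assumes ell: "elliptic_seq c x y" and ell': "elliptic_seq c x' y'" and gp: "general_position c x y x' y'"
    and m1: "m \<ge> 1" and G: "Gprop c x y x' y' m r s"
  shows "Gprop c x y x' y' (Suc m) r s"
proof -
  note g = gp_facts[OF gp]
  have injy: "\<And>i j. y i = y j \<longleftrightarrow> i = j" using g(4) by (simp add: inj_eq)
  have injy': "\<And>i j. y' i = y' j \<longleftrightarrow> i = j" using g(5) by (simp add: inj_eq)
  from G obtain C D where dD: "degree D \<le> 2" and id: "identP c x y x' y' m r s C D"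
    and e1: "poly D (y' (s - 1)) = (1/2) * C * Ycoef c 2 (y' (s - 1)) * (x' s - x' (s - 1))"
    and e2: "poly D (y' (s + int m - 1)) = - (1/2) * C * Ycoef c 2 (y' (s + int m - 1)) * (x' (s + int m) - x' (s + int m - 1))"
    unfolding Gprop_def by blast
  define C1 where "C1 = Cb c x x' (r + int m) (s + int m)"
  define D1 where "D1 = Db c x x' (r + int m) (s + int m)"
  note B = base[OF ell ell' gp, of "r + int m" "s + int m", folded C1_def D1_def]
  have idB: "identP c x y x' y' 1 (r + int m) (s + int m) C1 D1" using B(1) .
  have b1: "poly D1 (y' (s + int m - 1)) = (1/2) * C1 * Ycoef c 2 (y' (s + int m - 1)) * (x' (s + int m) - x' (s + int m - 1))"
    using B(2) .
  have b2: "poly D1 (y' (s + int m)) = - (1/2) * C1 * Ycoef c 2 (y' (s + int m)) * (x' (s + int m + 1) - x' (s + int m))"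
    using B(3) by simp
  have rA: "poly D (y (r + int m - 1)) = (1/2) * C * Ycoef c 2 (y (r + int m - 1)) * (x (r + int m) - x (r + int m - 1))"
    using R_evals(2)[OF ell gp m1 id] .
  have rB: "poly D1 (y (r + int m - 1)) = - (1/2) * C1 * Ycoef c 2 (y (r + int m - 1)) * (x (r + int m) - x (r + int m - 1))"
    using R_evals(1)[OF ell gp _ idB] by simp
  define a where "a = y (r + int m - 1)"
  define b where "b = y' (s + int m - 1)"
  have ab: "a \<noteq> b" unfolding a_def b_def using g(6) .
  define N where "N = smult C D1 + smult C1 D"
  have poly_N: "\<And>z. poly N z = C * poly D1 z + C1 * poly D z" by (simp add: N_def)
  have dN: "degree N \<le> 2" unfolding N_def
    using dD degree_Db[of c x x' "r + int m" "s + int m", folded D1_def]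
    by (meson degree_add_le degree_smult_le order_trans)
  have Na: "poly N a = 0" unfolding poly_N a_def rA rB by (simp add: algebra_simps)
  have Nb: "poly N b = 0" unfolding poly_N b_def b1 e2 by (simp add: algebra_simps)
  obtain q where q: "\<forall>z. poly N z = (z - a) * (z - b) * poly q z" and dq: "degree q \<le> 2 - 2"
    using two_roots[OF Na Nb ab dN] by auto
  obtain C' where qC: "q = [:C':]" using dq degree0_coeffs by auto
  have hN: "\<And>z. C * poly D1 z + C1 * poly D z = (z - a) * (z - b) * C'"
    using q unfolding poly_N qC by simp
  define M where "M = D * D1 + smult (C*C1/4) (Discp c)"
  have poly_M: "\<And>z. poly M z = poly D z * poly D1 z + C*C1/4 * Disc c z" by (simp add: M_def poly_Discp)
  have dM: "degree M \<le> 4"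
  proof -
    have "degree (D * D1) \<le> 4"
      using dD degree_Db[of c x x' "r + int m" "s + int m", folded D1_def] degree_mult_le[of D D1] by simp
    moreover have "degree (smult (C*C1/4) (Discp c)) \<le> 4" using degree_Discp degree_smult_le order_trans by blast
    ultimately show ?thesis unfolding M_def using degree_add_le by blast
  qed
  have rpa: "root_pair c a (x (r + int m - 1)) (x (r + int m))"
    unfolding a_def using ell_rp[OF ell g(1) g(9), of "r + int m - 1"] by simp
  have rpb: "root_pair c b (x' (s + int m - 1)) (x' (s + int m))"
    unfolding b_def using ell_rp[OF ell' g(2) g(10), of "s + int m - 1"] by simp
  have Ma: "poly M a = 0" unfolding poly_M rp_Disc[OF rpa] using rA rB unfolding a_def[symmetric]
    by (simp only: alg_van1)
  have Mb: "poly M b = 0" unfolding poly_M rp_Disc[OF rpb] using e2 b1 unfolding b_def[symmetric]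
    by (simp only: alg_van2)
  obtain D' where hM0: "\<forall>z. poly M z = (z - a) * (z - b) * poly D' z" and dD': "degree D' \<le> 4 - 2"
    using two_roots[OF Ma Mb ab dM] by auto
  have hM: "\<And>z. poly D z * poly D1 z + C*C1/4 * Disc c z = (z - a) * (z - b) * poly D' z"
    using hM0 unfolding poly_M by simp
  have ev1: "poly D' (y' (s - 1)) = (1/2) * C' * Ycoef c 2 (y' (s - 1)) * (x' s - x' (s - 1))"
  proof (rule alg_y1[OF hN hM e1])
    have rp: "root_pair c (y' (s-1)) (x' (s-1)) (x' s)" using ell_rp[OF ell' g(2) g(10), of "s-1"] by simp
    show "Disc c (y' (s - 1)) = (Ycoef c 2 (y' (s - 1)))^2 * (x' (s-1) - x' s)^2" using rp_Disc[OF rp] .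
    have "y' (s - 1) \<noteq> a" unfolding a_def using g(6) by metis
    moreover have "y' (s - 1) \<noteq> b" unfolding b_def using m1 by (simp add: injy')
    ultimately show "(y' (s - 1) - a) * (y' (s - 1) - b) \<noteq> 0" by simp
  qed
  have ev2: "poly D' (y' (s + int m)) = - (1/2) * C' * Ycoef c 2 (y' (s + int m)) * (x' (s + int m + 1) - x' (s + int m))"
  proof (rule alg_y2[OF hN hM b2])
    have rp: "root_pair c (y' (s + int m)) (x' (s + int m)) (x' (s + int m + 1))" using ell_rp[OF ell' g(2) g(10), of "s + int m"] by simp
    show "Disc c (y' (s + int m)) = (Ycoef c 2 (y' (s + int m)))^2 * (x' (s + int m) - x' (s + int m + 1))^2" using rp_Disc[OF rp] .
    have "y' (s + int m) \<noteq> a" unfolding a_def using g(6) by metis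
    moreover have "y' (s + int m) \<noteq> b" unfolding b_def by (simp add: injy')
    ultimately show "(y' (s + int m) - a) * (y' (s + int m) - b) \<noteq> 0" by simp
  qed
  have idS: "identP c x y x' y' (Suc m) r s C' D'"
    unfolding identP_def
  proof (intro allI impI)
    fix yy x1 x2
    assume h: "root_pair c yy x1 x2 \<and> (\<forall>k<Suc m. x1 \<noteq> x' (s + int k) \<and> x2 \<noteq> x' (s + int k)) \<and> (\<forall>k\<le>Suc m. yy \<noteq> y' (s - 1 + int k))"
    hence rp: "root_pair c yy x1 x2" by blast
    have ne: "x1 \<noteq> x2" and Y: "Ycoef c 2 yy \<noteq> 0" using rp unfolding root_pair_def by auto
    have hx: "\<And>k. k < Suc m \<Longrightarrow> x1 \<noteq> x' (s + int k) \<and> x2 \<noteq> x' (s + int k)" using h by blast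
    have hy: "\<And>k. k \<le> Suc m \<Longrightarrow> yy \<noteq> y' (s - 1 + int k)" using h by blast
    have cm: "root_pair c yy x1 x2 \<and> (\<forall>k<m. x1 \<noteq> x' (s + int k) \<and> x2 \<noteq> x' (s + int k)) \<and> (\<forall>k\<le>m. yy \<noteq> y' (s - 1 + int k))"
    proof (intro conjI rp allI impI)
      fix k assume "k < m" hence "k < Suc m" by simp
      from hx[OF this] show "x1 \<noteq> x' (s + int k)" "x2 \<noteq> x' (s + int k)" by simp_all
    next
      fix k assume "k \<le> m" hence "k \<le> Suc m" by simp
      from hy[OF this] show "yy \<noteq> y' (s - 1 + int k)" .
    qed
    have hm: "x1 \<noteq> x' (s + int m) \<and> x2 \<noteq> x' (s + int m)" using hx[of m] by simp
    have e3: "s - 1 + int m = s + int m - 1" "s - 1 + int (Suc m) = s + int m" by simp_all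
    have hyb: "yy \<noteq> b" using hy[of m] unfolding b_def e3 by simp
    have hyw: "yy \<noteq> y' (s + int m)" using hy[of "Suc m"] unfolding e3 by simp
    have c1: "root_pair c yy x1 x2 \<and> (\<forall>k<1. x1 \<noteq> x' (s + int m + int k) \<and> x2 \<noteq> x' (s + int m + int k)) \<and> (\<forall>k\<le>1. yy \<noteq> y' (s + int m - 1 + int k))"
    proof (intro conjI rp allI impI)
      fix k :: nat assume "k < 1" thus "x1 \<noteq> x' (s + int m + int k)" "x2 \<noteq> x' (s + int m + int k)" using hm by auto
    next
      fix k :: nat assume "k \<le> 1" hence "k = 0 \<or> k = 1" by auto
      thus "yy \<noteq> y' (s + int m - 1 + int k)" using hyb hyw unfolding b_def by auto
    qed
    define nu where "nu = (\<Prod>k<m - 1. (yy - y (r + int k)))"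
    define de where "de = (\<Prod>k\<le>m. (yy - y' (s - 1 + int k)))"
    have Dm: "Dop (Pmrs x x' m r s) x1 x2 = C * Ycoef c 2 yy * nu / de"
      and Mm: "Mop (Pmrs x x' m r s) x1 x2 = poly D yy * nu / de"
      unfolding nu_def de_def using identP_D[OF id, of yy x1 x2] cm by blast+
    have P1: "(\<Prod>k<1 - 1. (yy - y (r + int m + int k))) = 1" by simp
    have P2: "(\<Prod>k\<le>1. (yy - y' (s + int m - 1 + int k))) = (yy - b) * (yy - y' (s + int m))"
      unfolding prod_atMost_1 b_def by simp
    have D1e: "Dop (Pmrs x x' 1 (r + int m) (s + int m)) x1 x2 = C1 * Ycoef c 2 yy * 1 / ((yy - b) * (yy - y' (s + int m)))"
      and M1e: "Mop (Pmrs x x' 1 (r + int m) (s + int m)) x1 x2 = poly D1 yy * 1 / ((yy - b) * (yy - y' (s + int m)))"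
      using identP_D[OF idB, of yy x1 x2] c1 unfolding P1 P2 by blast+
    have nu': "(\<Prod>k<Suc m - 1. (yy - y (r + int k))) = nu * (yy - a)"
    proof -
      obtain m0 where m0: "m = Suc m0" using m1 by (cases m) auto
      have "r + int m0 = r + int m - 1" unfolding m0 by simp
      thus ?thesis unfolding nu_def a_def m0 by simp
    qed
    have de': "(\<Prod>k\<le>Suc m. (yy - y' (s - 1 + int k))) = de * (yy - y' (s + int m))"
      unfolding de_def by (simp add: algebra_simps)
    have den0: "de \<noteq> 0" unfolding de_def using cm by (subst prod_zero_iff) auto
    have t0: "yy - b \<noteq> 0" using hyb by simp
    have w0: "yy - y' (s + int m) \<noteq> 0" using hyw by simp
    show "Dop (Pmrs x x' (Suc m) r s) x1 x2 = C' * Ycoef c 2 yy * (\<Prod>k<Suc m - 1. (yy - y (r + int k))) / (\<Prod>k\<le>Suc m. (yy - y' (s - 1 + int k))) \<and>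
       Mop (Pmrs x x' (Suc m) r s) x1 x2 = poly D' yy * (\<Prod>k<Suc m - 1. (yy - y (r + int k))) / (\<Prod>k\<le>Suc m. (yy - y' (s - 1 + int k)))"
      unfolding nu' de' Pmrs_Suc Dop_mult[OF ne] Mop_mult[OF ne] Dm Mm D1e M1e
    proof
      show "C * Ycoef c 2 yy * nu / de * (poly D1 yy * 1 / ((yy - b) * (yy - y' (s + int m)))) +
            poly D yy * nu / de * (C1 * Ycoef c 2 yy * 1 / ((yy - b) * (yy - y' (s + int m)))) =
            C' * Ycoef c 2 yy * (nu * (yy - a)) / (de * (yy - y' (s + int m)))"
        by (rule alg_stepD[OF hN den0 t0 w0])
      show "poly D yy * nu / de * (poly D1 yy * 1 / ((yy - b) * (yy - y' (s + int m)))) +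
            (x1 - x2)^2 / 4 * (C * Ycoef c 2 yy * nu / de) * (C1 * Ycoef c 2 yy * 1 / ((yy - b) * (yy - y' (s + int m)))) =
            poly D' yy * (nu * (yy - a)) / (de * (yy - y' (s + int m)))"
        by (rule alg_stepM[OF hM rp_Disc[OF rp] den0 t0 w0])
    qed
  qed
  have ss: "s + int (Suc m) = s + int m + 1" "s + int m + 1 - 1 = s + int m" by simp_all
  show ?thesis unfolding Gprop_def
  proof (intro exI conjI)
    show "degree D' \<le> 2" using dD' by simp
    show "identP c x y x' y' (Suc m) r s C' D'" by (rule idS)
    show "poly D' (y' (s - 1)) = (1/2) * C' * Ycoef c 2 (y' (s - 1)) * (x' s - x' (s - 1))" by (rule ev1)
    show "poly D' (y' (s + int (Suc m) - 1)) = - (1/2) * C' * Ycoef c 2 (y' (s + int (Suc m) - 1)) * (x' (s + int (Suc m)) - x' (s + int (Suc m) - 1))"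
      unfolding ss by (rule ev2)
  qed
qed


lemma general:
  assumes ell: "elliptic_seq c x y" and ell': "elliptic_seq c x' y'" and gp: "general_position c x y x' y'"
  shows "m \<ge> 1 \<Longrightarrow> Gprop c x y x' y' m r s"
proof (induction m rule: nat_induct_at_least)
  case base thus ?case using G1[OF assms] by simp
next
  case (Suc n) thus ?case using step[OF assms] by simp
qed

lemma main_aux:
  fixes c :: "nat \<Rightarrow> nat \<Rightarrow> complex"
    and x y x' y' :: "int \<Rightarrow> complex"
  assumes ell: "elliptic_seq c x y"
    and ell': "elliptic_seq c x' y'"
    and gp: "general_position c x y x' y'"
    and m1: "m \<ge> 1"
  shows "\<exists>(C::complex) (D::complex poly). degree D \<le> 2 \<and> identP c x y x' y' m r s C D \<and>
    (m = 1 \<longrightarrow> C = (x r - x' s) / Xcoef c 2 (x' s) \<and>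
       (\<forall>t. poly D t = (Ycoef c 0 t + (x r + x' s) * Ycoef c 1 t / 2 + x r * x' s * Ycoef c 2 t)
                          / Xcoef c 2 (x' s))) \<and>
    poly D (y (r - 1)) = - (1/2) * C * Ycoef c 2 (y (r - 1)) * (x r - x (r - 1)) \<and>
    poly D (y (r + int m - 1)) = (1/2) * C * Ycoef c 2 (y (r + int m - 1)) * (x (r + int m) - x (r + int m - 1)) \<and>
    poly D (y' (s - 1)) = (1/2) * C * Ycoef c 2 (y' (s - 1)) * (x' s - x' (s - 1)) \<and>
    poly D (y' (s + int m - 1)) = - (1/2) * C * Ycoef c 2 (y' (s + int m - 1)) * (x' (s + int m) - x' (s + int m - 1))"
proof (cases "m = 1")
  case True
  note B = base[OF ell ell' gp, of r s]
  note R = R_evals[OF ell gp _ B(1)]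
  show ?thesis unfolding True
    apply (rule exI[of _ "Cb c x x' r s"], rule exI[of _ "Db c x x' r s"])
    using B R degree_Db[of c x x' r s] by (simp add: Cb_def poly_Db)
next
  case False
  from general[OF ell ell' gp m1, of r s] obtain C D where
    h: "degree D \<le> 2" "identP c x y x' y' m r s C D"
    "poly D (y' (s - 1)) = (1/2) * C * Ycoef c 2 (y' (s - 1)) * (x' s - x' (s - 1))"
    "poly D (y' (s + int m - 1)) = - (1/2) * C * Ycoef c 2 (y' (s + int m - 1)) * (x' (s + int m) - x' (s + int m - 1))"
    unfolding Gprop_def by blast
  note R = R_evals[OF ell gp m1 h(2)]
  show ?thesis using h R False by blast
qed

theorem mainTheorem8:
  fixes c :: "nat \<Rightarrow> nat \<Rightarrow> complex"
    and x y x' y' :: "int \<Rightarrow> complex"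
  assumes ell: "elliptic_seq c x y"
    and ell': "elliptic_seq c x' y'"
    and gp: "general_position c x y x' y'"
    and m1: "m \<ge> 1"
  shows "\<exists>(C::complex) (D::complex poly). degree D \<le> 2 \<and>
    (\<forall>yy x1 x2. root_pair c yy x1 x2 \<and>
        (\<forall>k<m. x1 \<noteq> x' (s + int k) \<and> x2 \<noteq> x' (s + int k)) \<and>
        (\<forall>k\<le>m. yy \<noteq> y' (s - 1 + int k)) \<longrightarrow>
       Dop (Pmrs x x' m r s) x1 x2 =
         C * Ycoef c 2 yy * (\<Prod>k<m - 1. (yy - y (r + int k))) / (\<Prod>k\<le>m. (yy - y' (s - 1 + int k))) \<and>
       Mop (Pmrs x x' m r s) x1 x2 =
         poly D yy * (\<Prod>k<m - 1. (yy - y (r + int k))) / (\<Prod>k\<le>m. (yy - y' (s - 1 + int k)))) \<and>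
    (m = 1 \<longrightarrow> C = (x r - x' s) / Xcoef c 2 (x' s) \<and>
       (\<forall>t. poly D t = (Ycoef c 0 t + (x r + x' s) * Ycoef c 1 t / 2 + x r * x' s * Ycoef c 2 t)
                          / Xcoef c 2 (x' s))) \<and>
    poly D (y (r - 1)) = - (1/2) * C * Ycoef c 2 (y (r - 1)) * (x r - x (r - 1)) \<and>
    poly D (y (r + int m - 1)) = (1/2) * C * Ycoef c 2 (y (r + int m - 1)) * (x (r + int m) - x (r + int m - 1)) \<and>
    poly D (y' (s - 1)) = (1/2) * C * Ycoef c 2 (y' (s - 1)) * (x' s - x' (s - 1)) \<and>
    poly D (y' (s + int m - 1)) = - (1/2) * C * Ycoef c 2 (y' (s + int m - 1)) * (x' (s + int m) - x' (s + int m - 1))"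
  using main_aux[OF ell ell' gp m1, of r s] unfolding identP_def .

end
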